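(* Let $d\ge 1$ and $k\ge d+2$ be integers. Let $\mu_1,\dots,\mu_k\in\mathbb{R}^d$ and let \[\rho(x)=\sum_{i=1}^k \frac{1}{k\sqrt{(2\pi)^d}}\,e^{-\frac12\|x-\mu_i\|^2},\qquad x\in\mathbb{R}^d,\] be the mixture of $k$ equally weighted normal distributions with identity covariance and means $\mu_1,\dots,\mu_k$. Assume that the point configuration $(\mu_1,\dots,\mu_k)$ is reconstructible from its multiset of pairwise distances. Then $\rho$ is uniquely reconstructible, up to a rigid motion, from its distribution of distances: if $\nu_1,\dots,\nu_k\in\mathbb{R}^d$ and $\bar\rho(x)=\sum_{i=1}^k \frac{1}{k\sqrt{(2\pi)^d}}e^{-\frac12\|x-\nu_i\|^2}$ has the same distribution of distances as $\rho$, then there exists $g\in E(d)$ with $\rho(x)=\bar\rho(g\cdot x)$ for all $x\in\mathbb{R}^d$.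
   Context: $E(d)$ denotes the Euclidean group of rigid motions of $\mathbb{R}^d$ and $\|\cdot\|$ the Euclidean norm. For a probability density $\rho$ on $\mathbb{R}^d$, its distribution of distances is the probability density $r(\Delta)$ of the random variable $\Delta=\|x_1-x_2\|^2$, where $x_1,x_2$ are drawn independently according to $\rho$. A point configuration $p_1,\dots,p_k\in\mathbb{R}^d$ is called reconstructible from its multiset of pairwise distances if for every configuration $q_1,\dots,q_k\in\mathbb{R}^d$ whose multiset of pairwise distances $\{\|q_i-q_j\|: i<j\}$ equals that of $p_1,\dots,p_k$, there exist $g\in E(d)$ and a permutation $\pi$ of $\{1,\dots,k\}$ with $g\cdot p_{\pi(i)}=q_i$ for all $i$. *)

theory Defs
  imports "HOL-Probability.Probability" "HOL-Combinatorics.Permutations" "HOL-Library.Multiset"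
begin

definition rigid_motion :: "(real^'n \<Rightarrow> real^'n) \<Rightarrow> bool" where
  "rigid_motion g \<longleftrightarrow>
     (\<exists>A b. orthogonal_transformation A \<and> (\<forall>x. g x = A x + b))"

definition pair_dists :: "nat \<Rightarrow> (nat \<Rightarrow> real^'n) \<Rightarrow> real multiset" where
  "pair_dists k p =
     image_mset (\<lambda>(i,j). dist (p i) (p j)) (mset_set {(i,j). i < j \<and> j < k})"

definition reconstructible :: "nat \<Rightarrow> (nat \<Rightarrow> real^'n) \<Rightarrow> bool" where
  "reconstructible k p \<longleftrightarrow>
     (\<forall>q :: nat \<Rightarrow> real^'n. pair_dists k q = pair_dists k p \<longrightarrow>
        (\<exists>g \<pi>. rigid_motion g \<and> \<pi> permutes {..<k} \<and> (\<forall>i<k. g (p (\<pi> i)) = q i)))"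

definition gauss_mixture :: "nat \<Rightarrow> (nat \<Rightarrow> real^'n) \<Rightarrow> real^'n \<Rightarrow> real" where
  "gauss_mixture k mu x =
     (\<Sum>i<k. 1 / (real k * sqrt ((2 * pi) ^ CARD('n))) * exp (- (1/2) * (norm (x - mu i))\<^sup>2))"

definition dist_distribution :: "(real^'n \<Rightarrow> real) \<Rightarrow> real measure" where
  "dist_distribution rho =
     distr (density lborel (\<lambda>x. ennreal (rho x)) \<Otimes>\<^sub>M density lborel (\<lambda>x. ennreal (rho x)))
           borel (\<lambda>(x1, x2). (norm (x1 - x2))\<^sup>2)"

end

theory Submission
  imports Defs
begin


lemma nn_integral_normal_density:
  assumes "0 < \<sigma>"
  shows "(\<integral>\<^sup>+x. ennreal (normal_density m \<sigma> x) \<partial>lborel) = 1"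
proof -
  interpret prob_space "density lborel (normal_density m \<sigma>)"
    using assms by (rule prob_space_normal_density)
  have "emeasure (density lborel (normal_density m \<sigma>)) UNIV = 1"
    using emeasure_space_1 by simp
  then show ?thesis by (simp add: emeasure_density)
qed

lemma gauss_1d:
  fixes \<alpha> \<beta> \<gamma> :: real
  assumes a: "0 < \<alpha>"
  shows "(\<integral>\<^sup>+v. ennreal (exp (- \<alpha> * v\<^sup>2 + \<beta> * v + \<gamma>)) \<partial>lborel)
         = ennreal (sqrt (pi / \<alpha>) * exp (\<beta>\<^sup>2 / (4 * \<alpha>) + \<gamma>))"
proof -
  define \<sigma> where "\<sigma> = sqrt (1 / (2 * \<alpha>))"
  define m where "m = \<beta> / (2 * \<alpha>)"
  define C where "C = sqrt (pi / \<alpha>) * exp (\<beta>\<^sup>2 / (4 * \<alpha>) + \<gamma>)"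
  have sp: "0 < \<sigma>" using a by (simp add: \<sigma>_def)
  have s2: "\<sigma>\<^sup>2 = 1 / (2 * \<alpha>)" using a by (simp add: \<sigma>_def)
  have Cp: "0 \<le> C" using a by (simp add: C_def)
  have eq: "exp (- \<alpha> * v\<^sup>2 + \<beta> * v + \<gamma>) = C * normal_density m \<sigma> v" for v
  proof -
    have h1: "sqrt (2 * pi * \<sigma>\<^sup>2) = sqrt (pi / \<alpha>)" using s2 by simp
    have h2: "sqrt (pi / \<alpha>) > 0" using a by simp
    have h3: "- \<alpha> * v\<^sup>2 + \<beta> * v + \<gamma> = (\<beta>\<^sup>2 / (4 * \<alpha>) + \<gamma>) + (-(v - m)\<^sup>2 / (2 * \<sigma>\<^sup>2))"
      using a unfolding s2 m_def by (simp add: field_simps power2_eq_square)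
    have "C * normal_density m \<sigma> v = sqrt (pi / \<alpha>) * (1 / sqrt (pi / \<alpha>)) * (exp (\<beta>\<^sup>2 / (4 * \<alpha>) + \<gamma>) * exp (-(v - m)\<^sup>2 / (2 * \<sigma>\<^sup>2)))"
      unfolding normal_density_def C_def h1 by simp
    also have "\<dots> = exp (- \<alpha> * v\<^sup>2 + \<beta> * v + \<gamma>)"
      using h2 a unfolding h3 exp_add by simp
    finally show ?thesis by simp
  qed
  have "(\<integral>\<^sup>+v. ennreal (exp (- \<alpha> * v\<^sup>2 + \<beta> * v + \<gamma>)) \<partial>lborel)
       = (\<integral>\<^sup>+v. ennreal C * ennreal (normal_density m \<sigma> v) \<partial>lborel)"
    by (intro nn_integral_cong) (simp only: eq ennreal_mult[OF Cp normal_density_nonneg])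
  also have "\<dots> = ennreal C * (\<integral>\<^sup>+v. ennreal (normal_density m \<sigma> v) \<partial>lborel)"
    by (rule nn_integral_cmult) simp
  also have "\<dots> = ennreal C" using nn_integral_normal_density[OF sp] by simp
  finally show ?thesis by (simp add: C_def)
qed

definition Kc :: "real \<Rightarrow> real" where
  "Kc t = sqrt (pi / ((2 + 4*t)/4)) * sqrt (pi / ((1 + 4*t) / (2 + 4*t)))"

definition sc :: "real \<Rightarrow> real" where
  "sc t = t / (1 + 4*t)"

lemma J1:
  fixes a b t :: real
  assumes t: "0 \<le> t"
  shows "(\<integral>\<^sup>+u. \<integral>\<^sup>+v. ennreal (exp (-(u-a)\<^sup>2/2) * exp (-(v-b)\<^sup>2/2) * exp (-t*(u-v)\<^sup>2)) \<partial>lborel \<partial>lborel)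
    = ennreal (Kc t * exp (- sc t * (a-b)\<^sup>2))"
proof -
  define D where "D = 2 + 4*t"
  define E where "E = 1 + 4*t"
  define N where "N = 4*t*b + a*D"
  define G where "G = b\<^sup>2 - (a\<^sup>2 + b\<^sup>2)*(1+2*t)"
  define c1 where "c1 = sqrt (pi / (D/4))"
  have Dp: "0 < D" "D \<noteq> 0" using t by (simp_all add: D_def)
  have Ep: "0 < E" "E \<noteq> 0" using t by (simp_all add: E_def)
  have a2: "0 < E / D" using Dp Ep by simp
  have c1: "0 \<le> c1" using Dp by (simp add: c1_def)
  have inner: "(\<integral>\<^sup>+v. ennreal (exp (-(u-a)\<^sup>2/2) * exp (-(v-b)\<^sup>2/2) * exp (-t*(u-v)\<^sup>2)) \<partial>lborel)
     = ennreal (c1 * exp (- (E/D) * u\<^sup>2 + (N/D) * u + G/D))" for u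
  proof -
    have "(\<integral>\<^sup>+v. ennreal (exp (-(u-a)\<^sup>2/2) * exp (-(v-b)\<^sup>2/2) * exp (-t*(u-v)\<^sup>2)) \<partial>lborel)
      = (\<integral>\<^sup>+v. ennreal (exp (- (D/4) * v\<^sup>2 + (b + 2*t*u) * v + (-(u-a)\<^sup>2/2 - b\<^sup>2/2 - t*u\<^sup>2))) \<partial>lborel)"
      unfolding D_def by (intro nn_integral_cong) (simp add: exp_add[symmetric] power2_eq_square field_simps)
    also have "\<dots> = ennreal (c1 * exp ((b + 2*t*u)\<^sup>2 / (4 * (D/4)) + (-(u-a)\<^sup>2/2 - b\<^sup>2/2 - t*u\<^sup>2)))"
      unfolding c1_def by (rule gauss_1d) (use Dp in simp)
    also have "(b + 2*t*u)\<^sup>2 / (4 * (D/4)) + (-(u-a)\<^sup>2/2 - b\<^sup>2/2 - t*u\<^sup>2)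
       = ((b + 2*t*u)\<^sup>2 - (1+2*t)*((u-a)\<^sup>2 + b\<^sup>2 + 2*t*u\<^sup>2)) / D"
      using Dp unfolding D_def by (simp add: field_simps)
    also have "(b + 2*t*u)\<^sup>2 - (1+2*t)*((u-a)\<^sup>2 + b\<^sup>2 + 2*t*u\<^sup>2) = - E * u\<^sup>2 + N * u + G"
      unfolding E_def N_def G_def D_def by (simp add: power2_eq_square algebra_simps)
    also have "(- E * u\<^sup>2 + N * u + G) / D = - (E/D) * u\<^sup>2 + (N/D) * u + G/D"
      by (simp add: add_divide_distrib diff_divide_distrib)
    finally show ?thesis .
  qed
  have "(\<integral>\<^sup>+u. \<integral>\<^sup>+v. ennreal (exp (-(u-a)\<^sup>2/2) * exp (-(v-b)\<^sup>2/2) * exp (-t*(u-v)\<^sup>2)) \<partial>lborel \<partial>lborel)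
     = (\<integral>\<^sup>+u. ennreal c1 * ennreal (exp (- (E/D) * u\<^sup>2 + (N/D) * u + G/D)) \<partial>lborel)"
    unfolding inner by (intro nn_integral_cong) (simp add: ennreal_mult c1)
  also have "\<dots> = ennreal c1 * (\<integral>\<^sup>+u. ennreal (exp (- (E/D) * u\<^sup>2 + (N/D) * u + G/D)) \<partial>lborel)"
    by (rule nn_integral_cmult) simp
  also have "\<dots> = ennreal c1 * ennreal (sqrt (pi / (E/D)) * exp ((N/D)\<^sup>2 / (4 * (E/D)) + G/D))"
    by (subst gauss_1d[OF a2]) (rule refl)
  also have "(N/D)\<^sup>2 / (4 * (E/D)) + G/D = (N\<^sup>2 + 4*E*G) / (4*E*D)"
    using Dp Ep by (simp add: field_simps power2_eq_square)
  also have "N\<^sup>2 + 4*E*G = - 4*t*D*(a-b)\<^sup>2"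
    unfolding E_def N_def G_def D_def by (simp add: power2_eq_square algebra_simps)
  also have "(- 4*t*D*(a-b)\<^sup>2) / (4*E*D) = - sc t * (a-b)\<^sup>2"
    using Dp Ep unfolding sc_def E_def[symmetric] by simp
  also have "ennreal c1 * ennreal (sqrt (pi / (E/D)) * exp (- sc t * (a-b)\<^sup>2)) = ennreal (c1 * (sqrt (pi / (E/D)) * exp (- sc t * (a-b)\<^sup>2)))"
    by (rule ennreal_mult'[symmetric, OF c1])
  also have "c1 * (sqrt (pi / (E/D)) * exp (- sc t * (a-b)\<^sup>2)) = Kc t * exp (- sc t * (a-b)\<^sup>2)"
    unfolding Kc_def c1_def E_def D_def by (simp add: mult.assoc)
  finally show ?thesis .
qed

lemma sqnorm_sum: "(norm (z::'a::euclidean_space))\<^sup>2 = (\<Sum>i\<in>Basis. (z \<bullet> i)\<^sup>2)"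
  unfolding power2_norm_eq_inner by (subst euclidean_inner) (simp add: power2_eq_square)

lemma Kc_pos: "0 \<le> t \<Longrightarrow> 0 < Kc t"
  unfolding Kc_def by (intro mult_pos_pos real_sqrt_gt_zero divide_pos_pos) auto

lemma Jn:
  fixes a b :: "'a::euclidean_space" and t :: real
  assumes t: "0 \<le> t"
  shows "(\<integral>\<^sup>+x. \<integral>\<^sup>+y. ennreal (exp (-(norm (x-a))\<^sup>2/2) * exp (-(norm (y-b))\<^sup>2/2) * exp (-t*(norm (x-y))\<^sup>2)) \<partial>lborel \<partial>lborel)
    = ennreal (Kc t ^ DIM('a) * exp (- sc t * (norm (a-b))\<^sup>2))"
proof -
  define g where "g = (\<lambda>i u v. ennreal (exp (-(u - a \<bullet> i)\<^sup>2/2) * exp (-(v - b \<bullet> i)\<^sup>2/2) * exp (-t*(u-v)\<^sup>2)))"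
  have gm[measurable]: "(\<lambda>(u, v). g i u v) \<in> borel_measurable (lborel \<Otimes>\<^sub>M lborel)" for i
    unfolding g_def by measurable
  have gm1[measurable]: "g i u \<in> borel_measurable borel" for i u
    unfolding g_def by measurable
  have pw: "ennreal (exp (-(norm (x-a))\<^sup>2/2) * exp (-(norm (y-b))\<^sup>2/2) * exp (-t*(norm (x-y))\<^sup>2))
     = (\<Prod>i\<in>Basis. g i (x \<bullet> i) (y \<bullet> i))" for x y
  proof -
    have "exp (-(norm (x-a))\<^sup>2/2) * exp (-(norm (y-b))\<^sup>2/2) * exp (-t*(norm (x-y))\<^sup>2)
      = (\<Prod>i\<in>Basis. exp (-(x \<bullet> i - a \<bullet> i)\<^sup>2/2)) * (\<Prod>i\<in>Basis. exp (-(y \<bullet> i - b \<bullet> i)\<^sup>2/2)) * (\<Prod>i\<in>Basis. exp (-t*(x \<bullet> i - y \<bullet> i)\<^sup>2))"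
      unfolding sqnorm_sum
      by (simp add: exp_sum[symmetric] sum_divide_distrib sum_distrib_left inner_diff_left sum_negf)
    also have "\<dots> = (\<Prod>i\<in>Basis. exp (-(x \<bullet> i - a \<bullet> i)\<^sup>2/2) * exp (-(y \<bullet> i - b \<bullet> i)\<^sup>2/2) * exp (-t*(x \<bullet> i - y \<bullet> i)\<^sup>2))"
      by (simp add: prod.distrib)
    finally show ?thesis unfolding g_def by (simp add: prod_ennreal)
  qed
  have "(\<integral>\<^sup>+x. \<integral>\<^sup>+y. ennreal (exp (-(norm (x-a))\<^sup>2/2) * exp (-(norm (y-b))\<^sup>2/2) * exp (-t*(norm (x-y))\<^sup>2)) \<partial>lborel \<partial>lborel)
     = (\<integral>\<^sup>+x. (\<Prod>i\<in>Basis. \<integral>\<^sup>+v. g i (x \<bullet> i) v \<partial>lborel) \<partial>lborel)"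
    unfolding pw by (subst nn_integral_lborel_prod) simp_all
  also have "\<dots> = (\<Prod>i\<in>Basis. \<integral>\<^sup>+u. \<integral>\<^sup>+v. g i u v \<partial>lborel \<partial>lborel)"
    by (rule nn_integral_lborel_prod) simp_all
  also have "\<dots> = (\<Prod>i\<in>Basis. ennreal (Kc t * exp (- sc t * (a \<bullet> i - b \<bullet> i)\<^sup>2)))"
    unfolding g_def using J1[OF t] by simp
  also have "\<dots> = ennreal (\<Prod>i\<in>Basis. Kc t * exp (- sc t * (a \<bullet> i - b \<bullet> i)\<^sup>2))"
    by (rule prod_ennreal) (use Kc_pos[OF t] in simp)
  also have "(\<Prod>i\<in>Basis. Kc t * exp (- sc t * (a \<bullet> i - b \<bullet> i)\<^sup>2)) = Kc t ^ DIM('a) * exp (- sc t * (norm (a-b))\<^sup>2)"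
  proof -
    have e: "(\<Prod>i\<in>Basis. exp (- sc t * (a \<bullet> i - b \<bullet> i)\<^sup>2)) = exp (\<Sum>i\<in>Basis. - sc t * (a \<bullet> i - b \<bullet> i)\<^sup>2)"
      by (simp add: exp_sum)
    have s: "(\<Sum>i\<in>Basis. - sc t * (a \<bullet> i - b \<bullet> i)\<^sup>2) = - sc t * (norm (a-b))\<^sup>2"
      unfolding sqnorm_sum by (simp add: sum_distrib_left inner_diff_left sum_negf)
    show ?thesis unfolding prod.distrib e s by simp
  qed
  finally show ?thesis .
qed



lemma exp_indep:
  fixes e c :: "'b \<Rightarrow> real" and a b :: real
  assumes "finite S" "inj_on e S" "a < b"
    and "\<forall>s\<in>{a<..<b}. (\<Sum>x\<in>S. c x * exp (- s * e x)) = 0"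
  shows "\<forall>x\<in>S. c x = 0"
  using assms
proof (induction S arbitrary: c rule: finite_induct)
  case empty
  then show ?case by simp
next
  case (insert x0 S)
  let ?I = "{a<..<b}"
  define c' where "c' = (\<lambda>x. c x * (e x0 - e x))"
  have inj: "inj_on e S" using insert.prems(1) by (simp add: inj_on_insert)
  have ne: "e x \<noteq> e x0" if "x \<in> S" for x
    using insert.prems(1) insert.hyps(2) that by (auto simp: inj_on_def)
  have H: "c x0 * exp (- s * e x0) + (\<Sum>x\<in>S. c x * exp (- s * e x)) = 0" if "s \<in> ?I" for s
    using insert.prems(3) that insert.hyps by simp
  define g where "g = (\<lambda>s. \<Sum>x\<in>S. c x * exp (s * (e x0 - e x)))"
  have gc: "g s = - c x0" if "s \<in> ?I" for s
  proof -
    have "exp (s * e x0) * (c x0 * exp (- s * e x0) + (\<Sum>x\<in>S. c x * exp (- s * e x))) = 0"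
      using H[OF that] by simp
    moreover have "exp (s * e x0) * (c x0 * exp (- s * e x0) + (\<Sum>x\<in>S. c x * exp (- s * e x)))
       = c x0 + g s"
      unfolding g_def by (simp add: sum_distrib_left algebra_simps exp_add[symmetric] exp_diff)
    ultimately show ?thesis by simp
  qed
  have c'0: "(\<Sum>x\<in>S. c' x * exp (- s * e x)) = 0" if s: "s \<in> ?I" for s
  proof -
    have d1: "(g has_real_derivative (\<Sum>x\<in>S. c x * (exp (s * (e x0 - e x)) * (e x0 - e x)))) (at s)"
      unfolding g_def by (auto intro!: derivative_eq_intros sum.cong simp: algebra_simps)
    have "((\<lambda>_. - c x0) has_real_derivative 0) (at s)" by (rule DERIV_const)
    then have d2: "(g has_real_derivative 0) (at s)"
      by (rule has_field_derivative_transform_within_open[where S="?I"]) (use s gc in auto)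
    have "(\<Sum>x\<in>S. c x * (exp (s * (e x0 - e x)) * (e x0 - e x))) = 0"
      using DERIV_unique[OF d1 d2] .
    then have "exp (- s * e x0) * (\<Sum>x\<in>S. c x * (exp (s * (e x0 - e x)) * (e x0 - e x))) = 0" by simp
    moreover have "exp (- s * e x0) * (\<Sum>x\<in>S. c x * (exp (s * (e x0 - e x)) * (e x0 - e x)))
        = (\<Sum>x\<in>S. c' x * exp (- s * e x))"
      unfolding c'_def sum_distrib_left
      by (intro sum.cong refl) (simp add: algebra_simps exp_add[symmetric])
    ultimately show ?thesis by simp
  qed
  have "\<forall>x\<in>S. c' x = 0"
    using insert.IH[OF inj insert.prems(2)] c'0 by blast
  then have cS: "\<forall>x\<in>S. c x = 0" using ne unfolding c'_def by (metis mult_eq_0_iff right_minus_eq)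
  have "(a+b)/2 \<in> ?I" using insert.prems(2) by simp
  from H[OF this] cS have "c x0 = 0" by simp
  with cS show ?case by simp
qed

lemma msum_count:
  assumes "finite S" "set_mset A \<subseteq> S"
  shows "(\<Sum>x\<in>#A. h x) = (\<Sum>x\<in>S. real (count A x) * (h x :: real))"
  using assms(2)
proof (induction A)
  case empty
  then show ?case by simp
next
  case (add y A)
  then have yS: "y \<in> S" and AS: "set_mset A \<subseteq> S" by auto
  have "(\<Sum>x\<in>S. real (count (add_mset y A) x) * h x)
      = (\<Sum>x\<in>S. real (count A x) * h x + (if x = y then h x else 0))"
    by (intro sum.cong refl) (auto simp: algebra_simps)
  also have "\<dots> = (\<Sum>x\<in>S. real (count A x) * h x) + h y"
    using assms(1) yS by (simp add: sum.distrib)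
  finally show ?case using add.IH[OF AS] by simp
qed

lemma mset_exp_ident:
  fixes A B :: "real multiset" and a b :: real
  assumes "a < b"
    and "\<forall>s\<in>{a<..<b}. (\<Sum>x\<in>#A. exp (- s * x\<^sup>2)) = (\<Sum>x\<in>#B. exp (- s * x\<^sup>2))"
    and "\<forall>x\<in>#A. 0 \<le> x" "\<forall>x\<in>#B. 0 \<le> x"
  shows "A = B"
proof -
  define S where "S = set_mset A \<union> set_mset B"
  have fS: "finite S" unfolding S_def by simp
  have inj: "inj_on (\<lambda>x. x\<^sup>2) S"
    using assms(3,4) unfolding S_def inj_on_def by (auto simp: power2_eq_iff_nonneg)
  have "\<forall>x\<in>S. (real (count A x) - real (count B x)) = 0"
  proof (rule exp_indep[OF fS inj assms(1)], intro ballI)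
    fix s assume s: "s \<in> {a<..<b}"
    have "(\<Sum>x\<in>S. (real (count A x) - real (count B x)) * exp (- s * x\<^sup>2))
      = (\<Sum>x\<in>#A. exp (- s * x\<^sup>2)) - (\<Sum>x\<in>#B. exp (- s * x\<^sup>2))"
      using msum_count[OF fS, of A "\<lambda>x. exp (- s * x\<^sup>2)"] msum_count[OF fS, of B "\<lambda>x. exp (- s * x\<^sup>2)"]
      unfolding S_def by (simp add: left_diff_distrib sum_subtractf)
    also have "\<dots> = 0" using assms(2) s by simp
    finally show "(\<Sum>x\<in>S. (real (count A x) - real (count B x)) * exp (- s * x\<^sup>2)) = 0" .
  qed
  then have "count A x = count B x" for x
    by (cases "x \<in> S") (auto simp: S_def not_in_iff)
  then show ?thesis by (rule multiset_eqI)
qed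



lemma DD:
  fixes p :: "nat \<Rightarrow> real^'n" and t :: real
  assumes t: "0 \<le> t"
  shows "(\<integral>\<^sup>+\<Delta>. ennreal (exp (- t * \<Delta>)) \<partial>dist_distribution (gauss_mixture k p))
    = ennreal ((1 / (real k * sqrt ((2 * pi) ^ CARD('n))))\<^sup>2 * Kc t ^ CARD('n) *
        (\<Sum>q\<in>{..<k}\<times>{..<k}. exp (- sc t * (norm (p (fst q) - p (snd q)))\<^sup>2)))"
proof -
  define c where "c = 1 / (real k * sqrt ((2 * pi) ^ CARD('n)))"
  define \<phi> where "\<phi> = (\<lambda>(x::real^'n) m. exp (-(norm (x - m))\<^sup>2/2))"
  define \<rho> where "\<rho> = gauss_mixture k p"
  have c0: "0 \<le> c" unfolding c_def by simp
  have \<rho>: "\<rho> x = (\<Sum>i<k. c * \<phi> x (p i))" for x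
    unfolding \<rho>_def gauss_mixture_def c_def \<phi>_def by simp
  have \<rho>m[measurable]: "\<rho> \<in> borel_measurable borel"
    unfolding \<rho>_def gauss_mixture_def by measurable
  have \<rho>nn: "0 \<le> \<rho> x" for x unfolding \<rho> \<phi>_def using c0 by (auto intro!: sum_nonneg)
  let ?M = "density lborel (\<lambda>x. ennreal (\<rho> x))"
  have sf: "sigma_finite_measure ?M"
    by (subst sigma_finite_measure.sigma_finite_iff_density_finite[OF sigma_finite_lborel]) auto
  interpret pair_sigma_finite ?M ?M using sf sf by (simp add: pair_sigma_finite_def)
  have step1: "(\<integral>\<^sup>+\<Delta>. ennreal (exp (- t * \<Delta>)) \<partial>dist_distribution \<rho>)
     = (\<integral>\<^sup>+x. \<integral>\<^sup>+y. ennreal (exp (- t * (norm (x - y))\<^sup>2)) \<partial>?M \<partial>?M)"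
  proof -
    have meas: "(\<lambda>z. ennreal (exp (- t * (norm (fst z - snd z))\<^sup>2))) \<in> borel_measurable (?M \<Otimes>\<^sub>M ?M)"
      by measurable
    have "(\<integral>\<^sup>+\<Delta>. ennreal (exp (- t * \<Delta>)) \<partial>dist_distribution \<rho>)
        = (\<integral>\<^sup>+z. ennreal (exp (- t * (norm (fst z - snd z))\<^sup>2)) \<partial>(?M \<Otimes>\<^sub>M ?M))"
      unfolding dist_distribution_def
      by (subst nn_integral_distr) (auto simp: case_prod_beta)
    also have "\<dots> = (\<integral>\<^sup>+x. \<integral>\<^sup>+y. ennreal (exp (- t * (norm (x - y))\<^sup>2)) \<partial>?M \<partial>?M)"
      using sigma_finite_measure.nn_integral_fst[OF sf meas] by simp
    finally show ?thesis .
  qed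
  also have "\<dots> = (\<integral>\<^sup>+x. \<integral>\<^sup>+y. ennreal (\<rho> x * \<rho> y * exp (- t * (norm (x - y))\<^sup>2)) \<partial>lborel \<partial>lborel)"
  proof -
    have "(\<integral>\<^sup>+x. \<integral>\<^sup>+y. ennreal (exp (- t * (norm (x - y))\<^sup>2)) \<partial>?M \<partial>?M)
      = (\<integral>\<^sup>+x. ennreal (\<rho> x) * \<integral>\<^sup>+y. ennreal (\<rho> y) * ennreal (exp (- t * (norm (x - y))\<^sup>2)) \<partial>lborel \<partial>lborel)"
      by (simp add: nn_integral_density)
    also have "\<dots> = (\<integral>\<^sup>+x. \<integral>\<^sup>+y. ennreal (\<rho> x) * (ennreal (\<rho> y) * ennreal (exp (- t * (norm (x - y))\<^sup>2))) \<partial>lborel \<partial>lborel)"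
      by (intro nn_integral_cong nn_integral_cmult[symmetric]) simp
    also have "\<dots> = (\<integral>\<^sup>+x. \<integral>\<^sup>+y. ennreal (\<rho> x * \<rho> y * exp (- t * (norm (x - y))\<^sup>2)) \<partial>lborel \<partial>lborel)"
      by (intro nn_integral_cong) (simp add: ennreal_mult \<rho>nn mult.assoc)
    finally show ?thesis .
  qed
  also have "\<dots> = (\<integral>\<^sup>+x. \<integral>\<^sup>+y. (\<Sum>q\<in>{..<k}\<times>{..<k}. ennreal (c\<^sup>2) *
       ennreal (exp (-(norm (x - p (fst q)))\<^sup>2/2) * exp (-(norm (y - p (snd q)))\<^sup>2/2) * exp (-t*(norm (x-y))\<^sup>2))) \<partial>lborel \<partial>lborel)"
  proof (intro nn_integral_cong)
    fix x y :: "real^'n"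
    have "\<rho> x * \<rho> y * exp (- t * (norm (x - y))\<^sup>2)
       = (\<Sum>q\<in>{..<k}\<times>{..<k}. c\<^sup>2 * (exp (-(norm (x - p (fst q)))\<^sup>2/2) * exp (-(norm (y - p (snd q)))\<^sup>2/2) * exp (-t*(norm (x-y))\<^sup>2)))"
    proof -
      have "\<rho> x * \<rho> y = (\<Sum>q\<in>{..<k}\<times>{..<k}. (c * \<phi> x (p (fst q))) * (c * \<phi> y (p (snd q))))"
        unfolding \<rho> sum_product sum.cartesian_product by (simp add: case_prod_beta)
      then have "\<rho> x * \<rho> y * exp (- t * (norm (x - y))\<^sup>2) = (\<Sum>q\<in>{..<k}\<times>{..<k}. (c * \<phi> x (p (fst q))) * (c * \<phi> y (p (snd q))) * exp (- t * (norm (x - y))\<^sup>2))"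
        by (simp add: sum_distrib_right)
      then show ?thesis unfolding \<phi>_def by (simp add: power2_eq_square algebra_simps)
    qed
    then show "ennreal (\<rho> x * \<rho> y * exp (- t * (norm (x - y))\<^sup>2)) = (\<Sum>q\<in>{..<k}\<times>{..<k}. ennreal (c\<^sup>2) *
       ennreal (exp (-(norm (x - p (fst q)))\<^sup>2/2) * exp (-(norm (y - p (snd q)))\<^sup>2/2) * exp (-t*(norm (x-y))\<^sup>2)))"
      by (simp add: sum_ennreal ennreal_mult[symmetric])
  qed
  also have "\<dots> = (\<Sum>q\<in>{..<k}\<times>{..<k}. ennreal (c\<^sup>2) * \<integral>\<^sup>+x. \<integral>\<^sup>+y.
       ennreal (exp (-(norm (x - p (fst q)))\<^sup>2/2) * exp (-(norm (y - p (snd q)))\<^sup>2/2) * exp (-t*(norm (x-y))\<^sup>2)) \<partial>lborel \<partial>lborel)"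
    by (simp add: nn_integral_sum nn_integral_cmult)
  also have "\<dots> = (\<Sum>q\<in>{..<k}\<times>{..<k}. ennreal (c\<^sup>2) * ennreal (Kc t ^ CARD('n) * exp (- sc t * (norm (p (fst q) - p (snd q)))\<^sup>2)))"
    using Jn[OF t, where 'a="real^'n"] by simp
  also have "\<dots> = ennreal (c\<^sup>2 * Kc t ^ CARD('n) * (\<Sum>q\<in>{..<k}\<times>{..<k}. exp (- sc t * (norm (p (fst q) - p (snd q)))\<^sup>2)))"
    using Kc_pos[OF t] by (simp add: ennreal_mult[symmetric] sum_ennreal sum_distrib_left mult.assoc)
  finally show ?thesis unfolding \<rho>_def c_def .
qed



lemma sq_decomp:
  fixes p :: "nat \<Rightarrow> real^'n" and s :: real
  shows "(\<Sum>q\<in>{..<k}\<times>{..<k}. exp (- s * (norm (p (fst q) - p (snd q)))\<^sup>2))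
    = real k + 2 * (\<Sum>q\<in>{(i,j). i < j \<and> j < k}. exp (- s * (norm (p (fst q) - p (snd q)))\<^sup>2))"
proof -
  define h where "h = (\<lambda>q. exp (- s * (norm (p (fst q) - p (snd q)))\<^sup>2))"
  define Dg where "Dg = (\<lambda>i. (i, i)) ` {..<k}"
  define P where "P = {(i,j). i < j \<and> j < (k::nat)}"
  define P' where "P' = {(i,j). j < i \<and> i < (k::nat)}"
  have fin: "finite Dg" "finite P" "finite P'"
  proof -
    show "finite Dg" unfolding Dg_def by simp
    have "P \<subseteq> {..<k}\<times>{..<k}" "P' \<subseteq> {..<k}\<times>{..<k}" unfolding P_def P'_def by auto
    then show "finite P" "finite P'" by (auto intro: finite_subset)
  qed
  have split: "{..<k}\<times>{..<k} = Dg \<union> P \<union> P'"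
    unfolding Dg_def P_def P'_def by auto
  have d1: "(Dg \<union> P) \<inter> P' = {}" "Dg \<inter> P = {}" unfolding Dg_def P_def P'_def by auto
  have "sum h ({..<k}\<times>{..<k}) = sum h Dg + sum h P + sum h P'"
    unfolding split using fin d1 by (simp add: sum.union_disjoint)
  moreover have "sum h Dg = real k"
    unfolding Dg_def h_def by (subst sum.reindex) (auto simp: inj_on_def)
  moreover have "sum h P' = sum h P"
  proof -
    have "P' = prod.swap ` P" unfolding P_def P'_def by auto
    then have "sum h P' = sum (h \<circ> prod.swap) P" by (simp add: sum.reindex)
    also have "\<dots> = sum h P" unfolding h_def by (intro sum.cong refl) (simp add: norm_minus_commute)
    finally show ?thesis .
  qed
  ultimately show ?thesis unfolding h_def P_def by simp
qed

lemma pd_sum: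
  fixes p :: "nat \<Rightarrow> real^'n"
  shows "(\<Sum>x\<in>#pair_dists k p. exp (- s * x\<^sup>2))
    = (\<Sum>q\<in>{(i,j). i < j \<and> j < k}. exp (- s * (norm (p (fst q) - p (snd q)))\<^sup>2))"
  unfolding pair_dists_def sum_unfold_sum_mset image_mset.compositionality
  by (intro arg_cong[where f=sum_mset] image_mset_cong) (auto simp: dist_norm)

theorem theorem3p1:
  fixes k :: nat and mu nu :: "nat \<Rightarrow> real^'n"
  assumes "k \<ge> CARD('n) + 2"
    and "reconstructible k mu"
    and "dist_distribution (gauss_mixture k nu) = dist_distribution (gauss_mixture k mu)"
  shows "\<exists>g. rigid_motion g \<and> (\<forall>x. gauss_mixture k mu x = gauss_mixture k nu (g x))"
proof -
  define c where "c = 1 / (real k * sqrt ((2 * pi) ^ CARD('n)))"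
  have kp: "k > 0" using assms(1) by simp
  have cp: "c > 0" unfolding c_def using kp by simp
  define F :: "(nat \<Rightarrow> real^'n) \<Rightarrow> real \<Rightarrow> real" where "F = (\<lambda>p s. (\<Sum>q\<in>{..<k}\<times>{..<k}. exp (- s * (norm (p (fst q) - p (snd q)))\<^sup>2)))"
  have Fnn: "0 \<le> F p s" for p s unfolding F_def by (auto intro!: sum_nonneg)
  have eqF: "F nu (sc t) = F mu (sc t)" if t: "0 \<le> t" for t
  proof -
    have "ennreal (c\<^sup>2 * Kc t ^ CARD('n) * F nu (sc t)) = ennreal (c\<^sup>2 * Kc t ^ CARD('n) * F mu (sc t))"
      using DD[OF t, of k nu] DD[OF t, of k mu] assms(3) unfolding F_def c_def by simp
    then have "c\<^sup>2 * Kc t ^ CARD('n) * F nu (sc t) = c\<^sup>2 * Kc t ^ CARD('n) * F mu (sc t)"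
      using Fnn Kc_pos[OF t] by (subst (asm) ennreal_inj) auto
    then show ?thesis using cp Kc_pos[OF t] by simp
  qed
  have pd: "pair_dists k nu = pair_dists k mu"
  proof (rule mset_exp_ident[of 0 "1/4"])
    show "\<forall>s\<in>{0<..<1/4}. (\<Sum>x\<in>#pair_dists k nu. exp (- s * x\<^sup>2)) = (\<Sum>x\<in>#pair_dists k mu. exp (- s * x\<^sup>2))"
    proof
      fix s :: real assume s: "s \<in> {0<..<1/4}"
      define t :: real where "t = s / (1 - 4 * s)"
      have t0: "0 \<le> t" using s unfolding t_def by simp
      have "sc t = s" using s unfolding t_def sc_def by (simp add: field_simps)
      then have "F nu s = F mu s" using eqF[OF t0] by simp
      then show "(\<Sum>x\<in>#pair_dists k nu. exp (- s * x\<^sup>2)) = (\<Sum>x\<in>#pair_dists k mu. exp (- s * x\<^sup>2))"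
        unfolding pd_sum F_def sq_decomp by simp
    qed
    show "\<forall>x\<in>#pair_dists k nu. 0 \<le> x" "\<forall>x\<in>#pair_dists k mu. 0 \<le> x"
      unfolding pair_dists_def by auto
  qed simp
  obtain g \<pi> where g: "rigid_motion g" and \<pi>: "\<pi> permutes {..<k}" and gi: "\<forall>i<k. g (mu (\<pi> i)) = nu i"
    using assms(2) pd unfolding reconstructible_def by blast
  obtain A b where A: "orthogonal_transformation A" and gAb: "\<forall>x. g x = A x + b"
    using g unfolding rigid_motion_def by blast
  have iso: "norm (g x - g y) = norm (x - y)" for x y
  proof -
    have "g x - g y = A (x - y)" using gAb A
      by (simp add: orthogonal_transformation_linear linear_diff)
    then show ?thesis using A by (simp add: orthogonal_transformation_norm)
  qed
  have "gauss_mixture k mu x = gauss_mixture k nu (g x)" for x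
  proof -
    let ?f = "\<lambda>i. 1 / (real k * sqrt ((2 * pi) ^ CARD('n))) * exp (- (1/2) * (norm (x - mu i))\<^sup>2)"
    have "gauss_mixture k nu (g x) = (\<Sum>i<k. 1 / (real k * sqrt ((2 * pi) ^ CARD('n))) * exp (- (1/2) * (norm (g x - g (mu (\<pi> i))))\<^sup>2))"
      unfolding gauss_mixture_def using gi by (intro sum.cong refl) auto
    also have "\<dots> = sum (?f \<circ> \<pi>) {..<k}" unfolding iso by simp
    also have "\<dots> = sum ?f {..<k}" using sum.permute[OF \<pi>, of ?f] by simp
    finally show ?thesis unfolding gauss_mixture_def by simp
  qed
  with g show ?thesis by blast
qed

end
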